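(* Let $S$ be a pomonoid and $B$ an $S$-poset. Every regular injective object $f:X\to B$ of $\mathbf{Pos}\text{-}S/B$ is a topological functor when $X$ and $B$ are regarded as categories (posets) and $f$ as a functor.
   Context: $\mathbf{Pos}\text{-}S$ is the category of right $S$-posets over a pomonoid $S$ with action-preserving monotone maps; $\mathbf{Pos}\text{-}S/B$ is its slice over $B$. Regular injective means injective with respect to order-embeddings (the regular monomorphisms). A poset is viewed as a category with a unique arrow $a\to a'$ iff $a\le a'$; monotone maps are functors. For a functor $G:\mathcal A\to\mathcal X$, a source $(f_i:A\to A_i)_{i\in I}$ in $\mathcal A$ is $G$-initial if for every source $(g_i:C\to A_i)_{i\in I}$ in $\mathcal A$ and every $\mathcal X$-morphism $h:GC\to GA$ with $Gg_i=Gf_i\circ h$ for all $i$, there is a unique $\bar h:C\to A$ with $G\bar h=h$ and $g_i=f_i\bar h$ for all $i$. A source $(f_i:A\to A_i)$ lifts a $G$-structured source $(x_i:X\to GA_i)$ if $GA=X$ and $Gf_i=x_i$ for all $i$. $G$ is topological if every $G$-structured source $(X\to GA_i)_{i\in I}$ has a unique $G$-initial lift. *)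

theory Defs
  imports Main
begin

definition poset_on :: "'a set \<Rightarrow> ('a \<Rightarrow> 'a \<Rightarrow> bool) \<Rightarrow> bool" where
  "poset_on A le \<longleftrightarrow>
     (\<forall>a\<in>A. le a a) \<and>
     (\<forall>a\<in>A. \<forall>b\<in>A. le a b \<and> le b a \<longrightarrow> a = b) \<and>
     (\<forall>a\<in>A. \<forall>b\<in>A. \<forall>c\<in>A. le a b \<and> le b c \<longrightarrow> le a c)"

record 's pomon =
  pm_car :: "'s set"
  pm_le :: "'s \<Rightarrow> 's \<Rightarrow> bool"
  pm_mult :: "'s \<Rightarrow> 's \<Rightarrow> 's"
  pm_one :: 's

definition pomonoid :: "'s pomon \<Rightarrow> bool" where
  "pomonoid S \<longleftrightarrow>
     poset_on (pm_car S) (pm_le S) \<and>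
     pm_one S \<in> pm_car S \<and>
     (\<forall>s\<in>pm_car S. \<forall>t\<in>pm_car S. pm_mult S s t \<in> pm_car S) \<and>
     (\<forall>s\<in>pm_car S. \<forall>t\<in>pm_car S. \<forall>u\<in>pm_car S.
        pm_mult S (pm_mult S s t) u = pm_mult S s (pm_mult S t u)) \<and>
     (\<forall>s\<in>pm_car S. pm_mult S (pm_one S) s = s \<and> pm_mult S s (pm_one S) = s) \<and>
     (\<forall>s\<in>pm_car S. \<forall>s'\<in>pm_car S. \<forall>t\<in>pm_car S. \<forall>t'\<in>pm_car S.
        pm_le S s s' \<and> pm_le S t t' \<longrightarrow> pm_le S (pm_mult S s t) (pm_mult S s' t'))"

record ('a, 's) sposet =
  sp_car :: "'a set"
  sp_le :: "'a \<Rightarrow> 'a \<Rightarrow> bool"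
  sp_act :: "'a \<Rightarrow> 's \<Rightarrow> 'a"

definition is_Sposet :: "'s pomon \<Rightarrow> ('a, 's) sposet \<Rightarrow> bool" where
  "is_Sposet S A \<longleftrightarrow>
     poset_on (sp_car A) (sp_le A) \<and>
     (\<forall>a\<in>sp_car A. \<forall>s\<in>pm_car S. sp_act A a s \<in> sp_car A) \<and>
     (\<forall>a\<in>sp_car A. sp_act A a (pm_one S) = a) \<and>
     (\<forall>a\<in>sp_car A. \<forall>s\<in>pm_car S. \<forall>t\<in>pm_car S.
        sp_act A (sp_act A a s) t = sp_act A a (pm_mult S s t)) \<and>
     (\<forall>a\<in>sp_car A. \<forall>a'\<in>sp_car A. \<forall>s\<in>pm_car S. \<forall>s'\<in>pm_car S.
        sp_le A a a' \<and> pm_le S s s' \<longrightarrow> sp_le A (sp_act A a s) (sp_act A a' s'))"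

definition Spos_hom :: "'s pomon \<Rightarrow> ('a, 's) sposet \<Rightarrow> ('b, 's) sposet \<Rightarrow> ('a \<Rightarrow> 'b) \<Rightarrow> bool" where
  "Spos_hom S A A' h \<longleftrightarrow>
     (\<forall>a\<in>sp_car A. h a \<in> sp_car A') \<and>
     (\<forall>a\<in>sp_car A. \<forall>b\<in>sp_car A. sp_le A a b \<longrightarrow> sp_le A' (h a) (h b)) \<and>
     (\<forall>a\<in>sp_car A. \<forall>s\<in>pm_car S. h (sp_act A a s) = sp_act A' (h a) s)"

definition slice_obj :: "'s pomon \<Rightarrow> ('b, 's) sposet \<Rightarrow> ('x, 's) sposet \<Rightarrow> ('x \<Rightarrow> 'b) \<Rightarrow> bool" where
  "slice_obj S B X f \<longleftrightarrow> pomonoid S \<and> is_Sposet S B \<and> is_Sposet S X \<and> Spos_hom S X B f"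

definition slice_hom :: "'s pomon \<Rightarrow> ('b, 's) sposet \<Rightarrow> ('x, 's) sposet \<Rightarrow> ('x \<Rightarrow> 'b)
    \<Rightarrow> ('y, 's) sposet \<Rightarrow> ('y \<Rightarrow> 'b) \<Rightarrow> ('x \<Rightarrow> 'y) \<Rightarrow> bool" where
  "slice_hom S B X f Y g h \<longleftrightarrow> Spos_hom S X Y h \<and> (\<forall>x\<in>sp_car X. g (h x) = f x)"

definition order_embedding :: "('x, 's) sposet \<Rightarrow> ('y, 's) sposet \<Rightarrow> ('x \<Rightarrow> 'y) \<Rightarrow> bool" where
  "order_embedding X Y h \<longleftrightarrow>
     (\<forall>x\<in>sp_car X. \<forall>x'\<in>sp_car X. sp_le Y (h x) (h x') \<longleftrightarrow> sp_le X x x')"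

text \<open>The test objects Y, Z range over S-posets whose
  carriers live in the type 'z.\<close>
definition regular_injective :: "'z itself \<Rightarrow> 's pomon \<Rightarrow> ('b, 's) sposet \<Rightarrow> ('x, 's) sposet
    \<Rightarrow> ('x \<Rightarrow> 'b) \<Rightarrow> bool" where
  "regular_injective ty S B X f \<longleftrightarrow>
     slice_obj S B X f \<and>
     (\<forall>(Y :: ('z, 's) sposet) g (Z :: ('z, 's) sposet) k m u.
        slice_obj S B Y g \<and> slice_obj S B Z k \<and>
        slice_hom S B Y g Z k m \<and> order_embedding Y Z m \<and>
        slice_hom S B Y g X f u \<longrightarrow>
        (\<exists>v. slice_hom S B Z k X f v \<and> (\<forall>y\<in>sp_car Y. v (m y) = u y)))"

text \<open>The source (A <= a i)_{i in I} in the poset X is G-initial for the monotone map G = f: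
  for every source (c <= a i)_{i in I} and every arrow f c <= f A in B there is a (necessarily
  unique, and automatically commuting) arrow c <= A.\<close>
definition initial_source :: "'x set \<Rightarrow> ('x \<Rightarrow> 'x \<Rightarrow> bool) \<Rightarrow> ('b \<Rightarrow> 'b \<Rightarrow> bool)
    \<Rightarrow> ('x \<Rightarrow> 'b) \<Rightarrow> 'x \<Rightarrow> 'i set \<Rightarrow> ('i \<Rightarrow> 'x) \<Rightarrow> bool" where
  "initial_source X leX leB f A I a \<longleftrightarrow>
     A \<in> X \<and> (\<forall>i\<in>I. a i \<in> X \<and> leX A (a i)) \<and>
     (\<forall>c\<in>X. (\<forall>i\<in>I. leX c (a i)) \<and> leB (f c) (f A) \<longrightarrow> leX c A)"

text \<open>The source (A <= a i) lifts the structured source (b <= f (a i)) iff f A = b.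
  f is topological iff every structured source, indexed by any index set of type 'i, has a
  unique initial lift.\<close>
definition topological :: "'i itself \<Rightarrow> 'x set \<Rightarrow> ('x \<Rightarrow> 'x \<Rightarrow> bool) \<Rightarrow> 'b set
    \<Rightarrow> ('b \<Rightarrow> 'b \<Rightarrow> bool) \<Rightarrow> ('x \<Rightarrow> 'b) \<Rightarrow> bool" where
  "topological ty X leX B leB f \<longleftrightarrow>
     (\<forall>(I :: 'i set) a b. b \<in> B \<and> (\<forall>i\<in>I. a i \<in> X \<and> leB b (f (a i))) \<longrightarrow>
        (\<exists>!A. A \<in> X \<and> (\<forall>i\<in>I. leX A (a i)) \<and> f A = b \<and> initial_source X leX leB f A I a))"

end

theory Submission
  imports Defs
begin

definition cls :: "'p set \<Rightarrow> ('p \<Rightarrow> 'p \<Rightarrow> bool) \<Rightarrow> 'p \<Rightarrow> 'p set" where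
  "cls P R p = {q\<in>P. R p q \<and> R q p}"

definition quot :: "'p set \<Rightarrow> ('p \<Rightarrow> 'p \<Rightarrow> bool) \<Rightarrow> ('p \<Rightarrow> 's \<Rightarrow> 'p) \<Rightarrow> 'p set \<Rightarrow> ('p set, 's) sposet" where
  "quot P R act P' = \<lparr>sp_car = cls P R ` P', sp_le = (\<lambda>U V. \<exists>p\<in>U. \<exists>q\<in>V. R p q),
      sp_act = (\<lambda>U t. cls P R (act (SOME p. p \<in> U) t))\<rparr>"

locale preq =
  fixes S :: "'s pomon" and P :: "'p set" and R :: "'p \<Rightarrow> 'p \<Rightarrow> bool" and act :: "'p \<Rightarrow> 's \<Rightarrow> 'p"
  assumes pm: "pomonoid S"
    and rrefl: "\<And>p. p \<in> P \<Longrightarrow> R p p"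
    and rtrans: "\<And>p q r. p \<in> P \<Longrightarrow> q \<in> P \<Longrightarrow> r \<in> P \<Longrightarrow> R p q \<Longrightarrow> R q r \<Longrightarrow> R p r"
    and aclosed: "\<And>p s. p \<in> P \<Longrightarrow> s \<in> pm_car S \<Longrightarrow> act p s \<in> P"
    and aone: "\<And>p. p \<in> P \<Longrightarrow> act p (pm_one S) = p"
    and aassoc: "\<And>p s t. p \<in> P \<Longrightarrow> s \<in> pm_car S \<Longrightarrow> t \<in> pm_car S \<Longrightarrow>
        act (act p s) t = act p (pm_mult S s t)"
    and amono: "\<And>p q s t. p \<in> P \<Longrightarrow> q \<in> P \<Longrightarrow> s \<in> pm_car S \<Longrightarrow> t \<in> pm_car S \<Longrightarrow>
        R p q \<Longrightarrow> pm_le S s t \<Longrightarrow> R (act p s) (act q t)"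
begin

lemma S_refl: "s \<in> pm_car S \<Longrightarrow> pm_le S s s"
  using pm unfolding pomonoid_def poset_on_def by blast

lemma S_one: "pm_one S \<in> pm_car S"
  using pm unfolding pomonoid_def by blast

lemma S_mult: "s \<in> pm_car S \<Longrightarrow> t \<in> pm_car S \<Longrightarrow> pm_mult S s t \<in> pm_car S"
  using pm unfolding pomonoid_def by blast

lemma cls_mem: "p \<in> P \<Longrightarrow> p \<in> cls P R p"
  unfolding cls_def using rrefl by auto

lemma cls_sub: "cls P R p \<subseteq> P"
  unfolding cls_def by auto

lemma cls_eq: "p \<in> P \<Longrightarrow> q \<in> P \<Longrightarrow> cls P R p = cls P R q \<longleftrightarrow> R p q \<and> R q p"
proof
  assume "p \<in> P" "q \<in> P" "cls P R p = cls P R q"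
  then show "R p q \<and> R q p" using cls_mem[of q] unfolding cls_def by auto
next
  assume "p \<in> P" "q \<in> P" "R p q \<and> R q p"
  then show "cls P R p = cls P R q" unfolding cls_def using rtrans by blast
qed

lemma le_cls:
  assumes p: "p \<in> P" and q: "q \<in> P"
  shows "sp_le (quot P R act P') (cls P R p) (cls P R q) \<longleftrightarrow> R p q"
proof
  assume "sp_le (quot P R act P') (cls P R p) (cls P R q)"
  then obtain p' q' where "p' \<in> cls P R p" "q' \<in> cls P R q" "R p' q'"
    unfolding quot_def by auto
  then have "p' \<in> P" "q' \<in> P" "R p p'" "R q' q" unfolding cls_def by auto
  then show "R p q" using rtrans p q \<open>R p' q'\<close> by metis
next
  assume "R p q"
  then show "sp_le (quot P R act P') (cls P R p) (cls P R q)"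
    unfolding quot_def using cls_mem p q by auto
qed

lemma some_cls: "p \<in> P \<Longrightarrow> (SOME r. r \<in> cls P R p) \<in> P \<and> R (SOME r. r \<in> cls P R p) p \<and> R p (SOME r. r \<in> cls P R p)"
proof -
  assume p: "p \<in> P"
  have "(SOME r. r \<in> cls P R p) \<in> cls P R p" using cls_mem[OF p] by (rule someI)
  then show ?thesis unfolding cls_def by auto
qed

lemma act_cls: "p \<in> P \<Longrightarrow> t \<in> pm_car S \<Longrightarrow> sp_act (quot P R act P') (cls P R p) t = cls P R (act p t)"
proof -
  assume p: "p \<in> P" and t: "t \<in> pm_car S"
  define r where "r = (SOME r. r \<in> cls P R p)"
  have r: "r \<in> P" "R r p" "R p r" using some_cls[OF p] unfolding r_def by auto
  have "cls P R (act r t) = cls P R (act p t)"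
  proof -
    have "R (act r t) (act p t)" using amono r p t S_refl by blast
    moreover have "R (act p t) (act r t)" using amono r p t S_refl by blast
    ultimately show ?thesis using cls_eq aclosed r p t by blast
  qed
  then show ?thesis unfolding quot_def r_def by simp
qed


lemma quot_sposet:
  assumes sub: "P' \<subseteq> P" and cl: "\<And>p s. p \<in> P' \<Longrightarrow> s \<in> pm_car S \<Longrightarrow> act p s \<in> P'"
  shows "is_Sposet S (quot P R act P')"
proof -
  let ?Q = "quot P R act P'"
  have car: "sp_car ?Q = cls P R ` P'" unfolding quot_def by simp
  have P'P: "p \<in> P" if "p \<in> P'" for p using sub that by blast
  have 1: "\<forall>U\<in>cls P R ` P'. sp_le ?Q U U" using le_cls P'P rrefl by blast
  have 2: "\<forall>U\<in>cls P R ` P'. \<forall>V\<in>cls P R ` P'. sp_le ?Q U V \<and> sp_le ?Q V U \<longrightarrow> U = V"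
    using le_cls cls_eq P'P by blast
  have 3: "\<forall>U\<in>cls P R ` P'. \<forall>V\<in>cls P R ` P'. \<forall>W\<in>cls P R ` P'. sp_le ?Q U V \<and> sp_le ?Q V W \<longrightarrow> sp_le ?Q U W"
  proof (intro ballI impI)
    fix U V W assume "U \<in> cls P R ` P'" "V \<in> cls P R ` P'" "W \<in> cls P R ` P'" "sp_le ?Q U V \<and> sp_le ?Q V W"
    then obtain p q r where pqr: "p \<in> P'" "q \<in> P'" "r \<in> P'" "U = cls P R p" "V = cls P R q" "W = cls P R r"
      by blast
    then have "R p q" "R q r" using le_cls P'P \<open>sp_le ?Q U V \<and> sp_le ?Q V W\<close> by auto
    then have "R p r" using rtrans P'P pqr by blast
    then show "sp_le ?Q U W" using le_cls P'P pqr by auto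
  qed
  have 4: "\<forall>U\<in>cls P R ` P'. \<forall>s\<in>pm_car S. sp_act ?Q U s \<in> cls P R ` P'"
    using act_cls P'P cl by auto
  have 5: "\<forall>U\<in>cls P R ` P'. sp_act ?Q U (pm_one S) = U"
    using act_cls P'P aone S_one by auto
  have 6: "\<forall>U\<in>cls P R ` P'. \<forall>s\<in>pm_car S. \<forall>t\<in>pm_car S. sp_act ?Q (sp_act ?Q U s) t = sp_act ?Q U (pm_mult S s t)"
    using act_cls P'P aassoc aclosed S_mult by auto
  have 7: "\<forall>U\<in>cls P R ` P'. \<forall>V\<in>cls P R ` P'. \<forall>s\<in>pm_car S. \<forall>t\<in>pm_car S.
      sp_le ?Q U V \<and> pm_le S s t \<longrightarrow> sp_le ?Q (sp_act ?Q U s) (sp_act ?Q V t)"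
  proof (intro ballI impI)
    fix U V s t assume "U \<in> cls P R ` P'" "V \<in> cls P R ` P'" "s \<in> pm_car S" "t \<in> pm_car S"
      "sp_le ?Q U V \<and> pm_le S s t"
    then obtain p q where pq: "p \<in> P'" "q \<in> P'" "U = cls P R p" "V = cls P R q"
      by blast
    then have "R p q" "pm_le S s t" using le_cls P'P \<open>sp_le ?Q U V \<and> pm_le S s t\<close> by auto
    then show "sp_le ?Q (sp_act ?Q U s) (sp_act ?Q V t)"
      using act_cls le_cls amono aclosed \<open>s \<in> pm_car S\<close> \<open>t \<in> pm_car S\<close> pq P'P by simp
  qed
  show ?thesis
    unfolding is_Sposet_def poset_on_def car by (intro conjI 1 2 3 4 5 6 7)
qed

lemma quot_hom:
  assumes sub: "P' \<subseteq> P" and BS: "is_Sposet S B"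
    and hc: "\<And>p. p \<in> P \<Longrightarrow> h p \<in> sp_car B"
    and hm: "\<And>p q. p \<in> P \<Longrightarrow> q \<in> P \<Longrightarrow> R p q \<Longrightarrow> sp_le B (h p) (h q)"
    and ha: "\<And>p s. p \<in> P \<Longrightarrow> s \<in> pm_car S \<Longrightarrow> h (act p s) = sp_act B (h p) s"
  shows "Spos_hom S (quot P R act P') B (\<lambda>U. h (SOME p. p \<in> U))"
    and "\<And>p. p \<in> P \<Longrightarrow> h (SOME r. r \<in> cls P R p) = h p"
proof -
  have hcls: "h (SOME r. r \<in> cls P R p) = h p" if p: "p \<in> P" for p
  proof -
    have "sp_le B (h (SOME r. r \<in> cls P R p)) (h p)" "sp_le B (h p) (h (SOME r. r \<in> cls P R p))"
      using some_cls[OF p] hm p by auto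
    moreover have "h (SOME r. r \<in> cls P R p) \<in> sp_car B" "h p \<in> sp_car B"
      using hc p some_cls[OF p] by auto
    ultimately show ?thesis using BS unfolding is_Sposet_def poset_on_def by blast
  qed
  then show "\<And>p. p \<in> P \<Longrightarrow> h (SOME r. r \<in> cls P R p) = h p" .
  have car: "sp_car (quot P R act P') = cls P R ` P'" unfolding quot_def by simp
  have P'P: "p \<in> P" if "p \<in> P'" for p using sub that by blast
  show "Spos_hom S (quot P R act P') B (\<lambda>U. h (SOME p. p \<in> U))"
    unfolding Spos_hom_def car
  proof (intro conjI ballI impI; elim imageE; clarify)
    fix p assume "p \<in> P'" then show "h (SOME pa. pa \<in> cls P R p) \<in> sp_car B"
      using hcls hc P'P by simp
  next
    fix p q assume "p \<in> P'" "q \<in> P'" "sp_le (quot P R act P') (cls P R p) (cls P R q)"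
    then show "sp_le B (h (SOME pa. pa \<in> cls P R p)) (h (SOME pa. pa \<in> cls P R q))"
      using hcls hm P'P le_cls by simp
  next
    fix p s assume "p \<in> P'" "s \<in> pm_car S"
    then show "h (SOME pa. pa \<in> sp_act (quot P R act P') (cls P R p) s) = sp_act B (h (SOME pa. pa \<in> cls P R p)) s"
      using hcls ha act_cls aclosed P'P by simp
  qed
qed

end


definition DD :: "'s pomon \<Rightarrow> ('b, 's) sposet \<Rightarrow> ('x, 's) sposet \<Rightarrow> ('x \<Rightarrow> 'b) \<Rightarrow> 'b \<Rightarrow> 'i set \<Rightarrow> ('i \<Rightarrow> 'x) \<Rightarrow> 'x set" where
  "DD S B X f b I a = {c \<in> sp_car X. (\<forall>i\<in>I. sp_le X c (a i)) \<and> sp_le B (f c) b}"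

definition PP :: "'s pomon \<Rightarrow> ('x, 's) sposet \<Rightarrow> ('x + 's) set" where
  "PP S X = Inl ` sp_car X \<union> Inr ` pm_car S"

definition RR :: "'s pomon \<Rightarrow> ('b, 's) sposet \<Rightarrow> ('x, 's) sposet \<Rightarrow> ('x \<Rightarrow> 'b) \<Rightarrow> 'b \<Rightarrow> 'i set \<Rightarrow> ('i \<Rightarrow> 'x)
    \<Rightarrow> 'x + 's \<Rightarrow> 'x + 's \<Rightarrow> bool" where
  "RR S B X f b I a p q = (case p of
      Inl x \<Rightarrow> (case q of Inl y \<Rightarrow> sp_le X x y
                        | Inr t \<Rightarrow> (\<exists>c\<in>DD S B X f b I a. sp_le X x (sp_act X c t)))
    | Inr s \<Rightarrow> (case q of Inl y \<Rightarrow> (\<exists>i\<in>I. sp_le X (sp_act X (a i) s) y)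
                        | Inr t \<Rightarrow> pm_le S s t \<or>
                            (\<exists>i\<in>I. \<exists>c\<in>DD S B X f b I a. sp_le X (sp_act X (a i) s) (sp_act X c t))))"

definition AA :: "'s pomon \<Rightarrow> ('x, 's) sposet \<Rightarrow> 'x + 's \<Rightarrow> 's \<Rightarrow> 'x + 's" where
  "AA S X p t = (case p of Inl x \<Rightarrow> Inl (sp_act X x t) | Inr s \<Rightarrow> Inr (pm_mult S s t))"

definition KK :: "('b, 's) sposet \<Rightarrow> ('x \<Rightarrow> 'b) \<Rightarrow> 'b \<Rightarrow> 'x + 's \<Rightarrow> 'b" where
  "KK B f b p = (case p of Inl x \<Rightarrow> f x | Inr s \<Rightarrow> sp_act B b s)"

lemma RR_simps[simp]:
  "RR S B X f b I a (Inl x) (Inl y) = sp_le X x y"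
  "RR S B X f b I a (Inl x) (Inr t) = (\<exists>c\<in>DD S B X f b I a. sp_le X x (sp_act X c t))"
  "RR S B X f b I a (Inr s) (Inl y) = (\<exists>i\<in>I. sp_le X (sp_act X (a i) s) y)"
  "RR S B X f b I a (Inr s) (Inr t) = (pm_le S s t \<or>
      (\<exists>i\<in>I. \<exists>c\<in>DD S B X f b I a. sp_le X (sp_act X (a i) s) (sp_act X c t)))"
  unfolding RR_def by simp_all

lemma AA_simps[simp]: "AA S X (Inl x) t = Inl (sp_act X x t)" "AA S X (Inr s) t = Inr (pm_mult S s t)"
  unfolding AA_def by simp_all

lemma KK_simps[simp]: "KK B f b (Inl x) = f x" "KK B f b (Inr s) = sp_act B b s"
  unfolding KK_def by simp_all

locale cons =
  fixes S :: "'s pomon" and B :: "('b, 's) sposet" and X :: "('x, 's) sposet" and f :: "'x \<Rightarrow> 'b"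
    and b :: 'b and I :: "'i set" and a :: "'i \<Rightarrow> 'x"
  assumes pm: "pomonoid S" and BS: "is_Sposet S B" and XS: "is_Sposet S X" and fh: "Spos_hom S X B f"
    and bB: "b \<in> sp_car B" and aX: "\<And>i. i \<in> I \<Longrightarrow> a i \<in> sp_car X"
    and ba: "\<And>i. i \<in> I \<Longrightarrow> sp_le B b (f (a i))"
begin

abbreviation "D \<equiv> DD S B X f b I a"
abbreviation "R \<equiv> RR S B X f b I a"

lemma S_refl: "s \<in> pm_car S \<Longrightarrow> pm_le S s s"
  using pm unfolding pomonoid_def poset_on_def by blast
lemma S_one: "pm_one S \<in> pm_car S"
  using pm unfolding pomonoid_def by blast
lemma S_mult: "s \<in> pm_car S \<Longrightarrow> t \<in> pm_car S \<Longrightarrow> pm_mult S s t \<in> pm_car S"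
  using pm unfolding pomonoid_def by blast
lemma S_mono: "s \<in> pm_car S \<Longrightarrow> s' \<in> pm_car S \<Longrightarrow> t \<in> pm_car S \<Longrightarrow> t' \<in> pm_car S \<Longrightarrow>
    pm_le S s s' \<Longrightarrow> pm_le S t t' \<Longrightarrow> pm_le S (pm_mult S s t) (pm_mult S s' t')"
  using pm unfolding pomonoid_def by blast
lemma S_assoc: "s \<in> pm_car S \<Longrightarrow> t \<in> pm_car S \<Longrightarrow> u \<in> pm_car S \<Longrightarrow>
    pm_mult S (pm_mult S s t) u = pm_mult S s (pm_mult S t u)"
  using pm unfolding pomonoid_def by blast
lemma S_unit: "s \<in> pm_car S \<Longrightarrow> pm_mult S s (pm_one S) = s"
  using pm unfolding pomonoid_def by blast
lemma S_trans: "s \<in> pm_car S \<Longrightarrow> t \<in> pm_car S \<Longrightarrow> u \<in> pm_car S \<Longrightarrow>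
    pm_le S s t \<Longrightarrow> pm_le S t u \<Longrightarrow> pm_le S s u"
  using pm unfolding pomonoid_def poset_on_def by blast

lemma X_refl: "x \<in> sp_car X \<Longrightarrow> sp_le X x x"
  using XS unfolding is_Sposet_def poset_on_def by blast
lemma X_antisym: "x \<in> sp_car X \<Longrightarrow> y \<in> sp_car X \<Longrightarrow> sp_le X x y \<Longrightarrow> sp_le X y x \<Longrightarrow> x = y"
  using XS unfolding is_Sposet_def poset_on_def by blast
lemma X_trans: "x \<in> sp_car X \<Longrightarrow> y \<in> sp_car X \<Longrightarrow> z \<in> sp_car X \<Longrightarrow>
    sp_le X x y \<Longrightarrow> sp_le X y z \<Longrightarrow> sp_le X x z"
  using XS unfolding is_Sposet_def poset_on_def by blast
lemma X_act: "x \<in> sp_car X \<Longrightarrow> s \<in> pm_car S \<Longrightarrow> sp_act X x s \<in> sp_car X"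
  using XS unfolding is_Sposet_def by blast
lemma X_one: "x \<in> sp_car X \<Longrightarrow> sp_act X x (pm_one S) = x"
  using XS unfolding is_Sposet_def by blast
lemma X_assoc: "x \<in> sp_car X \<Longrightarrow> s \<in> pm_car S \<Longrightarrow> t \<in> pm_car S \<Longrightarrow>
    sp_act X (sp_act X x s) t = sp_act X x (pm_mult S s t)"
  using XS unfolding is_Sposet_def by blast
lemma X_mono: "x \<in> sp_car X \<Longrightarrow> y \<in> sp_car X \<Longrightarrow> s \<in> pm_car S \<Longrightarrow> t \<in> pm_car S \<Longrightarrow>
    sp_le X x y \<Longrightarrow> pm_le S s t \<Longrightarrow> sp_le X (sp_act X x s) (sp_act X y t)"
  using XS unfolding is_Sposet_def by blast
lemma X_mono1: "x \<in> sp_car X \<Longrightarrow> y \<in> sp_car X \<Longrightarrow> s \<in> pm_car S \<Longrightarrow>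
    sp_le X x y \<Longrightarrow> sp_le X (sp_act X x s) (sp_act X y s)"
  using X_mono S_refl by blast
lemma X_mono2: "x \<in> sp_car X \<Longrightarrow> s \<in> pm_car S \<Longrightarrow> t \<in> pm_car S \<Longrightarrow>
    pm_le S s t \<Longrightarrow> sp_le X (sp_act X x s) (sp_act X x t)"
  using X_mono X_refl by blast

lemma B_refl: "x \<in> sp_car B \<Longrightarrow> sp_le B x x"
  using BS unfolding is_Sposet_def poset_on_def by blast
lemma B_trans: "x \<in> sp_car B \<Longrightarrow> y \<in> sp_car B \<Longrightarrow> z \<in> sp_car B \<Longrightarrow>
    sp_le B x y \<Longrightarrow> sp_le B y z \<Longrightarrow> sp_le B x z"
  using BS unfolding is_Sposet_def poset_on_def by blast
lemma B_act: "x \<in> sp_car B \<Longrightarrow> s \<in> pm_car S \<Longrightarrow> sp_act B x s \<in> sp_car B"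
  using BS unfolding is_Sposet_def by blast
lemma B_one: "x \<in> sp_car B \<Longrightarrow> sp_act B x (pm_one S) = x"
  using BS unfolding is_Sposet_def by blast
lemma B_assoc: "x \<in> sp_car B \<Longrightarrow> s \<in> pm_car S \<Longrightarrow> t \<in> pm_car S \<Longrightarrow>
    sp_act B (sp_act B x s) t = sp_act B x (pm_mult S s t)"
  using BS unfolding is_Sposet_def by blast
lemma B_mono: "x \<in> sp_car B \<Longrightarrow> y \<in> sp_car B \<Longrightarrow> s \<in> pm_car S \<Longrightarrow> t \<in> pm_car S \<Longrightarrow>
    sp_le B x y \<Longrightarrow> pm_le S s t \<Longrightarrow> sp_le B (sp_act B x s) (sp_act B y t)"
  using BS unfolding is_Sposet_def by blast

lemma f_car: "x \<in> sp_car X \<Longrightarrow> f x \<in> sp_car B"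
  using fh unfolding Spos_hom_def by blast
lemma f_mono: "x \<in> sp_car X \<Longrightarrow> y \<in> sp_car X \<Longrightarrow> sp_le X x y \<Longrightarrow> sp_le B (f x) (f y)"
  using fh unfolding Spos_hom_def by blast
lemma f_act: "x \<in> sp_car X \<Longrightarrow> s \<in> pm_car S \<Longrightarrow> f (sp_act X x s) = sp_act B (f x) s"
  using fh unfolding Spos_hom_def by blast

lemma D_X: "c \<in> D \<Longrightarrow> c \<in> sp_car X"
  unfolding DD_def by blast
lemma D_le: "c \<in> D \<Longrightarrow> i \<in> I \<Longrightarrow> sp_le X c (a i)"
  unfolding DD_def by blast
lemma D_b: "c \<in> D \<Longrightarrow> sp_le B (f c) b"
  unfolding DD_def by blast

lemma Dact_le: "c \<in> D \<Longrightarrow> i \<in> I \<Longrightarrow> t \<in> pm_car S \<Longrightarrow> sp_le X (sp_act X c t) (sp_act X (a i) t)"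
  using X_mono1 D_X D_le aX by blast


abbreviation "P \<equiv> PP S X"
abbreviation "act \<equiv> AA S X"
abbreviation "k \<equiv> KK B f b"

lemma P_cases: "p \<in> P \<Longrightarrow> (\<And>x. x \<in> sp_car X \<Longrightarrow> p = Inl x \<Longrightarrow> thesis) \<Longrightarrow>
    (\<And>s. s \<in> pm_car S \<Longrightarrow> p = Inr s \<Longrightarrow> thesis) \<Longrightarrow> thesis"
  unfolding PP_def by blast

lemma P_Inl[simp]: "Inl x \<in> P \<longleftrightarrow> x \<in> sp_car X" unfolding PP_def by blast
lemma P_Inr[simp]: "Inr s \<in> P \<longleftrightarrow> s \<in> pm_car S" unfolding PP_def by blast

lemma R_trans:
  assumes p: "p \<in> P" and q: "q \<in> P" and r: "r \<in> P" and pq: "R p q" and qr: "R q r"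
  shows "R p r"
proof -
  note ax = X_act aX D_X
  show ?thesis
  proof (rule P_cases[OF p]; rule P_cases[OF q]; rule P_cases[OF r])
    fix x y z assume h: "x \<in> sp_car X" "p = Inl x" "y \<in> sp_car X" "q = Inl y" "z \<in> sp_car X" "r = Inl z"
    have "sp_le X x y" "sp_le X y z" using pq qr h by simp_all
    then show ?thesis using X_trans[of x y z] h by simp
  next
    fix x y u assume h: "x \<in> sp_car X" "p = Inl x" "y \<in> sp_car X" "q = Inl y" "u \<in> pm_car S" "r = Inr u"
    then obtain c where c: "c \<in> D" "sp_le X y (sp_act X c u)" using qr by auto
    have "sp_le X x y" using pq h by simp
    then have "sp_le X x (sp_act X c u)" using X_trans[of x y "sp_act X c u"] c h X_act D_X by blast
    then show ?thesis using h c by auto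
  next
    fix x t z assume h: "x \<in> sp_car X" "p = Inl x" "t \<in> pm_car S" "q = Inr t" "z \<in> sp_car X" "r = Inl z"
    then obtain c where c: "c \<in> D" "sp_le X x (sp_act X c t)" using pq by auto
    obtain i where i: "i \<in> I" "sp_le X (sp_act X (a i) t) z" using qr h by auto
    have "sp_le X (sp_act X c t) (sp_act X (a i) t)" using Dact_le c i h by blast
    then have "sp_le X (sp_act X c t) z" using X_trans[of "sp_act X c t" "sp_act X (a i) t" z] c i h X_act D_X aX by blast
    then have "sp_le X x z" using X_trans[of x "sp_act X c t" z] c i h X_act D_X by blast
    then show ?thesis using h by simp
  next
    fix x t u assume h: "x \<in> sp_car X" "p = Inl x" "t \<in> pm_car S" "q = Inr t" "u \<in> pm_car S" "r = Inr u"
    then obtain c where c: "c \<in> D" "sp_le X x (sp_act X c t)" using pq by auto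
    have "pm_le S t u \<or> (\<exists>i\<in>I. \<exists>c'\<in>D. sp_le X (sp_act X (a i) t) (sp_act X c' u))" using qr h by simp
    then have "\<exists>c'\<in>D. sp_le X x (sp_act X c' u)"
    proof
      assume "pm_le S t u"
      then have "sp_le X (sp_act X c t) (sp_act X c u)" using X_mono2 c h D_X by blast
      then have "sp_le X x (sp_act X c u)" using X_trans[of x "sp_act X c t" "sp_act X c u"] c h X_act D_X by blast
      then show ?thesis using c by blast
    next
      assume "\<exists>i\<in>I. \<exists>c'\<in>D. sp_le X (sp_act X (a i) t) (sp_act X c' u)"
      then obtain i c' where ic: "i \<in> I" "c' \<in> D" "sp_le X (sp_act X (a i) t) (sp_act X c' u)" by blast
      have "sp_le X (sp_act X c t) (sp_act X (a i) t)" using Dact_le c ic h by blast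
      then have "sp_le X (sp_act X c t) (sp_act X c' u)" using X_trans[of "sp_act X c t" "sp_act X (a i) t" "sp_act X c' u"] c ic h X_act D_X aX by blast
      then have "sp_le X x (sp_act X c' u)" using X_trans[of x "sp_act X c t" "sp_act X c' u"] c ic h X_act D_X by blast
      then show ?thesis using ic by blast
    qed
    then show ?thesis using h by simp
  next
    fix s y z assume h: "s \<in> pm_car S" "p = Inr s" "y \<in> sp_car X" "q = Inl y" "z \<in> sp_car X" "r = Inl z"
    then obtain i where i: "i \<in> I" "sp_le X (sp_act X (a i) s) y" using pq by auto
    have "sp_le X y z" using qr h by simp
    then have "sp_le X (sp_act X (a i) s) z" using X_trans[of "sp_act X (a i) s" y z] i h X_act aX by blast
    then show ?thesis using h i by auto
  next
    fix s y u assume h: "s \<in> pm_car S" "p = Inr s" "y \<in> sp_car X" "q = Inl y" "u \<in> pm_car S" "r = Inr u"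
    then obtain i where i: "i \<in> I" "sp_le X (sp_act X (a i) s) y" using pq by auto
    obtain c where c: "c \<in> D" "sp_le X y (sp_act X c u)" using qr h by auto
    have "sp_le X (sp_act X (a i) s) (sp_act X c u)" using X_trans[of "sp_act X (a i) s" y "sp_act X c u"] i c h X_act aX D_X by blast
    then show ?thesis using h i c by auto
  next
    fix s t z assume h: "s \<in> pm_car S" "p = Inr s" "t \<in> pm_car S" "q = Inr t" "z \<in> sp_car X" "r = Inl z"
    obtain j where j: "j \<in> I" "sp_le X (sp_act X (a j) t) z" using qr h by auto
    have "pm_le S s t \<or> (\<exists>i\<in>I. \<exists>c\<in>D. sp_le X (sp_act X (a i) s) (sp_act X c t))" using pq h by simp
    then have "\<exists>i\<in>I. sp_le X (sp_act X (a i) s) z"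
    proof
      assume "pm_le S s t"
      then have "sp_le X (sp_act X (a j) s) (sp_act X (a j) t)" using X_mono2 j h aX by blast
      then have "sp_le X (sp_act X (a j) s) z" using X_trans[of "sp_act X (a j) s" "sp_act X (a j) t" z] j h X_act aX by blast
      then show ?thesis using j by blast
    next
      assume "\<exists>i\<in>I. \<exists>c\<in>D. sp_le X (sp_act X (a i) s) (sp_act X c t)"
      then obtain i c where ic: "i \<in> I" "c \<in> D" "sp_le X (sp_act X (a i) s) (sp_act X c t)" by blast
      have "sp_le X (sp_act X c t) (sp_act X (a j) t)" using Dact_le ic j h by blast
      then have "sp_le X (sp_act X c t) z" using X_trans[of "sp_act X c t" "sp_act X (a j) t" z] ic j h X_act aX D_X by blast
      then have "sp_le X (sp_act X (a i) s) z" using X_trans[of "sp_act X (a i) s" "sp_act X c t" z] ic j h X_act aX D_X by blast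
      then show ?thesis using ic by blast
    qed
    then show ?thesis using h by simp
  next
    fix s t u assume h: "s \<in> pm_car S" "p = Inr s" "t \<in> pm_car S" "q = Inr t" "u \<in> pm_car S" "r = Inr u"
    have A: "pm_le S s t \<or> (\<exists>i\<in>I. \<exists>c\<in>D. sp_le X (sp_act X (a i) s) (sp_act X c t))" using pq h by simp
    have B: "pm_le S t u \<or> (\<exists>i\<in>I. \<exists>c\<in>D. sp_le X (sp_act X (a i) t) (sp_act X c u))" using qr h by simp
    have "pm_le S s u \<or> (\<exists>i\<in>I. \<exists>c\<in>D. sp_le X (sp_act X (a i) s) (sp_act X c u))"
    proof (cases "pm_le S s t")
      case st: True
      show ?thesis using B
      proof
        assume "pm_le S t u" then show ?thesis using st S_trans h by blast
      next
        assume "\<exists>i\<in>I. \<exists>c\<in>D. sp_le X (sp_act X (a i) t) (sp_act X c u)"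
        then obtain i c where ic: "i \<in> I" "c \<in> D" "sp_le X (sp_act X (a i) t) (sp_act X c u)" by blast
        have "sp_le X (sp_act X (a i) s) (sp_act X (a i) t)" using X_mono2 st ic h aX by blast
        then have "sp_le X (sp_act X (a i) s) (sp_act X c u)" using X_trans[of "sp_act X (a i) s" "sp_act X (a i) t" "sp_act X c u"] ic h X_act aX D_X by blast
        then show ?thesis using ic by blast
      qed
    next
      case False
      then obtain i c where ic: "i \<in> I" "c \<in> D" "sp_le X (sp_act X (a i) s) (sp_act X c t)" using A by blast
      show ?thesis using B
      proof
        assume "pm_le S t u"
        then have "sp_le X (sp_act X c t) (sp_act X c u)" using X_mono2 ic h D_X by blast
        then have "sp_le X (sp_act X (a i) s) (sp_act X c u)" using X_trans[of "sp_act X (a i) s" "sp_act X c t" "sp_act X c u"] ic h X_act aX D_X by blast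
        then show ?thesis using ic by blast
      next
        assume "\<exists>i\<in>I. \<exists>c\<in>D. sp_le X (sp_act X (a i) t) (sp_act X c u)"
        then obtain j c' where jc: "j \<in> I" "c' \<in> D" "sp_le X (sp_act X (a j) t) (sp_act X c' u)" by blast
        have "sp_le X (sp_act X c t) (sp_act X (a j) t)" using Dact_le ic jc h by blast
        then have "sp_le X (sp_act X c t) (sp_act X c' u)" using X_trans[of "sp_act X c t" "sp_act X (a j) t" "sp_act X c' u"] ic jc h X_act aX D_X by blast
        then have "sp_le X (sp_act X (a i) s) (sp_act X c' u)" using X_trans[of "sp_act X (a i) s" "sp_act X c t" "sp_act X c' u"] ic jc h X_act aX D_X by blast
        then show ?thesis using ic jc by blast
      qed
    qed
    then show ?thesis using h by simp
  qed
qed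


lemma R_refl: "p \<in> P \<Longrightarrow> R p p"
  by (erule P_cases) (auto intro: X_refl S_refl)

lemma act_closed: "p \<in> P \<Longrightarrow> s \<in> pm_car S \<Longrightarrow> act p s \<in> P"
  by (erule P_cases) (auto intro: X_act S_mult)

lemma act_one: "p \<in> P \<Longrightarrow> act p (pm_one S) = p"
  by (erule P_cases) (auto simp: X_one S_unit)

lemma act_assoc: "p \<in> P \<Longrightarrow> s \<in> pm_car S \<Longrightarrow> t \<in> pm_car S \<Longrightarrow> act (act p s) t = act p (pm_mult S s t)"
  by (erule P_cases) (auto simp: X_assoc S_assoc)

lemma act_mono:
  assumes p: "p \<in> P" and q: "q \<in> P" and s: "s \<in> pm_car S" and t: "t \<in> pm_car S"
    and pq: "R p q" and st: "pm_le S s t"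
  shows "R (act p s) (act q t)"
proof (rule P_cases[OF p]; rule P_cases[OF q])
  fix x y assume h: "x \<in> sp_car X" "p = Inl x" "y \<in> sp_car X" "q = Inl y"
  then have "sp_le X x y" using pq by simp
  then have "sp_le X (sp_act X x s) (sp_act X y t)" using X_mono h s t st by blast
  then show ?thesis using h by simp
next
  fix x u assume h: "x \<in> sp_car X" "p = Inl x" "u \<in> pm_car S" "q = Inr u"
  then obtain c where c: "c \<in> D" "sp_le X x (sp_act X c u)" using pq by auto
  then have "sp_le X (sp_act X x s) (sp_act X (sp_act X c u) t)" using X_mono h s t st X_act D_X by blast
  then have "sp_le X (sp_act X x s) (sp_act X c (pm_mult S u t))" using X_assoc c h t D_X by simp
  then show ?thesis using h c by auto
next
  fix u y assume h: "u \<in> pm_car S" "p = Inr u" "y \<in> sp_car X" "q = Inl y"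
  then obtain i where i: "i \<in> I" "sp_le X (sp_act X (a i) u) y" using pq by auto
  then have "sp_le X (sp_act X (sp_act X (a i) u) s) (sp_act X y t)" using X_mono h s t st X_act aX by blast
  then have "sp_le X (sp_act X (a i) (pm_mult S u s)) (sp_act X y t)" using X_assoc i h s aX by simp
  then show ?thesis using h i by auto
next
  fix u v assume h: "u \<in> pm_car S" "p = Inr u" "v \<in> pm_car S" "q = Inr v"
  have "pm_le S u v \<or> (\<exists>i\<in>I. \<exists>c\<in>D. sp_le X (sp_act X (a i) u) (sp_act X c v))" using pq h by simp
  then have "pm_le S (pm_mult S u s) (pm_mult S v t) \<or>
      (\<exists>i\<in>I. \<exists>c\<in>D. sp_le X (sp_act X (a i) (pm_mult S u s)) (sp_act X c (pm_mult S v t)))"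
  proof
    assume "pm_le S u v" then show ?thesis using S_mono h s t st by blast
  next
    assume "\<exists>i\<in>I. \<exists>c\<in>D. sp_le X (sp_act X (a i) u) (sp_act X c v)"
    then obtain i c where ic: "i \<in> I" "c \<in> D" "sp_le X (sp_act X (a i) u) (sp_act X c v)" by blast
    then have "sp_le X (sp_act X (sp_act X (a i) u) s) (sp_act X (sp_act X c v) t)"
      using X_mono h s t st X_act aX D_X by blast
    then have "sp_le X (sp_act X (a i) (pm_mult S u s)) (sp_act X c (pm_mult S v t))"
      using X_assoc ic h s t aX D_X by simp
    then show ?thesis using ic by blast
  qed
  then show ?thesis using h by simp
qed

lemma preq: "preq S P R act"
  unfolding preq_def using pm R_refl R_trans act_closed act_one act_assoc act_mono by blast

lemma k_car: "p \<in> P \<Longrightarrow> k p \<in> sp_car B"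
  by (erule P_cases) (auto intro: f_car B_act bB)

lemma k_act: "p \<in> P \<Longrightarrow> s \<in> pm_car S \<Longrightarrow> k (act p s) = sp_act B (k p) s"
  by (erule P_cases) (auto simp: f_act B_assoc bB)

lemma fa_ge: "i \<in> I \<Longrightarrow> s \<in> pm_car S \<Longrightarrow> sp_le B (sp_act B b s) (f (sp_act X (a i) s))"
  using B_mono[of b "f (a i)" s s] bB f_car aX ba S_refl f_act by simp

lemma fc_le: "c \<in> D \<Longrightarrow> s \<in> pm_car S \<Longrightarrow> sp_le B (f (sp_act X c s)) (sp_act B b s)"
  using B_mono[of "f c" b s s] bB f_car D_X D_b S_refl f_act by simp

lemma k_mono:
  assumes p: "p \<in> P" and q: "q \<in> P" and pq: "R p q"
  shows "sp_le B (k p) (k q)"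
proof (rule P_cases[OF p]; rule P_cases[OF q])
  fix x y assume h: "x \<in> sp_car X" "p = Inl x" "y \<in> sp_car X" "q = Inl y"
  then show ?thesis using pq f_mono by simp
next
  fix x u assume h: "x \<in> sp_car X" "p = Inl x" "u \<in> pm_car S" "q = Inr u"
  then obtain c where c: "c \<in> D" "sp_le X x (sp_act X c u)" using pq by auto
  then have "sp_le B (f x) (f (sp_act X c u))" using f_mono h X_act D_X by blast
  then have "sp_le B (f x) (sp_act B b u)" using B_trans fc_le c h f_car X_act D_X B_act bB by meson
  then show ?thesis using h by simp
next
  fix u y assume h: "u \<in> pm_car S" "p = Inr u" "y \<in> sp_car X" "q = Inl y"
  then obtain i where i: "i \<in> I" "sp_le X (sp_act X (a i) u) y" using pq by auto
  then have "sp_le B (f (sp_act X (a i) u)) (f y)" using f_mono h X_act aX by blast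
  then have "sp_le B (sp_act B b u) (f y)" using B_trans fa_ge i h f_car X_act aX B_act bB by meson
  then show ?thesis using h by simp
next
  fix u v assume h: "u \<in> pm_car S" "p = Inr u" "v \<in> pm_car S" "q = Inr v"
  have "pm_le S u v \<or> (\<exists>i\<in>I. \<exists>c\<in>D. sp_le X (sp_act X (a i) u) (sp_act X c v))" using pq h by simp
  then have "sp_le B (sp_act B b u) (sp_act B b v)"
  proof
    assume "pm_le S u v" then show ?thesis using B_mono B_refl bB h by blast
  next
    assume "\<exists>i\<in>I. \<exists>c\<in>D. sp_le X (sp_act X (a i) u) (sp_act X c v)"
    then obtain i c where ic: "i \<in> I" "c \<in> D" "sp_le X (sp_act X (a i) u) (sp_act X c v)" by blast
    then have 1: "sp_le B (f (sp_act X (a i) u)) (f (sp_act X c v))" using f_mono h X_act aX D_X by blast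
    have 2: "sp_le B (sp_act B b u) (f (sp_act X (a i) u))" using fa_ge ic h by blast
    have 3: "sp_le B (f (sp_act X c v)) (sp_act B b v)" using fc_le ic h by blast
    have m: "sp_act B b u \<in> sp_car B" "sp_act B b v \<in> sp_car B" "f (sp_act X (a i) u) \<in> sp_car B"
      "f (sp_act X c v) \<in> sp_car B" using B_act bB h f_car X_act aX D_X ic by auto
    show ?thesis using B_trans[OF m(1) m(3) m(4) 2 1] B_trans m 3 by blast
  qed
  then show ?thesis using h by simp
qed


lemma exists_A:
  assumes RI: "regular_injective TYPE(('x + 's) set) S B X f"
  shows "\<exists>A\<in>sp_car X. (\<forall>i\<in>I. sp_le X A (a i)) \<and> f A = b \<and>
     (\<forall>c\<in>sp_car X. (\<forall>i\<in>I. sp_le X c (a i)) \<and> sp_le B (f c) b \<longrightarrow> sp_le X c A)"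
proof -
  interpret Q: preq S P R act by (rule preq)
  define Z where "Z = quot P R act P"
  define Y where "Y = quot P R act (Inl ` sp_car X)"
  define kZ where "kZ = (\<lambda>U. k (SOME p. p \<in> U))"
  define u :: "('x + 's) set \<Rightarrow> 'x" where "u = (\<lambda>U. THE x. Inl x \<in> U)"
  have YsubP: "Inl ` sp_car X \<subseteq> P" by auto
  have Ycl: "\<And>p s. p \<in> Inl ` sp_car X \<Longrightarrow> s \<in> pm_car S \<Longrightarrow> act p s \<in> Inl ` sp_car X"
    using X_act by auto
  have ZS: "is_Sposet S Z" unfolding Z_def by (rule Q.quot_sposet) (auto intro: act_closed)
  have YS: "is_Sposet S Y" unfolding Y_def by (rule Q.quot_sposet[OF YsubP Ycl])
  have kZh: "Spos_hom S Z B kZ" unfolding Z_def kZ_def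
    by (rule Q.quot_hom(1)[OF subset_refl BS k_car k_mono k_act])
  have kYh: "Spos_hom S Y B kZ" unfolding Y_def kZ_def
    by (rule Q.quot_hom(1)[OF YsubP BS k_car k_mono k_act])
  have kcls: "kZ (cls P R p) = k p" if "p \<in> P" for p unfolding kZ_def
    by (rule Q.quot_hom(2)[OF subset_refl BS k_car k_mono k_act that])
  have leYZ: "sp_le Y = sp_le Z" "sp_act Y = sp_act Z" unfolding Y_def Z_def quot_def by simp_all
  have carY: "sp_car Y = cls P R ` Inl ` sp_car X" unfolding Y_def quot_def by simp
  have carZ: "sp_car Z = cls P R ` P" unfolding Z_def quot_def by simp
  have leZ: "sp_le Z (cls P R p) (cls P R q) \<longleftrightarrow> R p q" if "p \<in> P" "q \<in> P" for p q
    unfolding Z_def using Q.le_cls that by blast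
  have actZ: "sp_act Z (cls P R p) s = cls P R (act p s)" if "p \<in> P" "s \<in> pm_car S" for p s
    unfolding Z_def using Q.act_cls that by blast
  have u_cls: "u (cls P R (Inl x)) = x" if x: "x \<in> sp_car X" for x
    unfolding u_def
  proof (rule the_equality)
    show "Inl x \<in> cls P R (Inl x)" using Q.cls_mem x by simp
  next
    fix y assume "Inl y \<in> cls P R (Inl x)"
    then have "y \<in> sp_car X" "sp_le X x y" "sp_le X y x" unfolding cls_def by auto
    then show "y = x" using X_antisym x by blast
  qed
  have so1: "slice_obj S B Y kZ" unfolding slice_obj_def using pm BS YS kYh by blast
  have so2: "slice_obj S B Z kZ" unfolding slice_obj_def using pm BS ZS kZh by blast
  have sh1: "slice_hom S B Y kZ Z kZ id"
    unfolding slice_hom_def Spos_hom_def carY carZ leYZ using YsubP by auto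
  have oe: "order_embedding Y Z id" unfolding order_embedding_def leYZ by simp
  have uh: "Spos_hom S Y X u"
    unfolding Spos_hom_def carY
  proof (intro conjI ballI impI)
    fix U assume "U \<in> cls P R ` Inl ` sp_car X"
    then show "u U \<in> sp_car X" using u_cls by auto
  next
    fix U V assume "U \<in> cls P R ` Inl ` sp_car X" "V \<in> cls P R ` Inl ` sp_car X" "sp_le Y U V"
    then obtain x y where "x \<in> sp_car X" "y \<in> sp_car X" "U = cls P R (Inl x)" "V = cls P R (Inl y)"
      "sp_le Z (cls P R (Inl x)) (cls P R (Inl y))" using leYZ by auto
    then show "sp_le X (u U) (u V)" using u_cls leZ by simp
  next
    fix U s assume "U \<in> cls P R ` Inl ` sp_car X" "s \<in> pm_car S"
    then obtain x where "x \<in> sp_car X" "U = cls P R (Inl x)" by auto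
    then show "u (sp_act Y U s) = sp_act X (u U) s"
      using u_cls actZ leYZ \<open>s \<in> pm_car S\<close> X_act by simp
  qed
  have sh2: "slice_hom S B Y kZ X f u"
    unfolding slice_hom_def using uh carY u_cls kcls by auto
  obtain v where sv: "slice_hom S B Z kZ X f v" and vm: "\<forall>y\<in>sp_car Y. v (id y) = u y"
    using RI so1 so2 sh1 oe sh2 unfolding regular_injective_def by blast
  have vX: "v U \<in> sp_car X" if "U \<in> sp_car Z" for U
    using sv that unfolding slice_hom_def Spos_hom_def by blast
  have vmono: "sp_le X (v U) (v V)" if "U \<in> sp_car Z" "V \<in> sp_car Z" "sp_le Z U V" for U V
    using sv that unfolding slice_hom_def Spos_hom_def by blast
  have vf: "f (v U) = kZ U" if "U \<in> sp_car Z" for U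
    using sv that unfolding slice_hom_def by blast
  have vInl: "v (cls P R (Inl x)) = x" if "x \<in> sp_car X" for x
    using vm u_cls that carY by auto
  define A where "A = v (cls P R (Inr (pm_one S)))"
  have oneZ: "cls P R (Inr (pm_one S)) \<in> sp_car Z" using carZ S_one by simp
  have InlZ: "cls P R (Inl x) \<in> sp_car Z" if "x \<in> sp_car X" for x using carZ that by simp
  have AX: "A \<in> sp_car X" unfolding A_def using vX oneZ by blast
  have fA: "f A = b" unfolding A_def using vf oneZ kcls S_one B_one bB by simp
  have Aa: "sp_le X A (a i)" if i: "i \<in> I" for i
  proof -
    have "R (Inr (pm_one S)) (Inl (a i))" using i X_one X_refl aX by auto
    then have "sp_le Z (cls P R (Inr (pm_one S))) (cls P R (Inl (a i)))" using leZ S_one aX i by simp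
    then show ?thesis unfolding A_def using vmono oneZ InlZ aX i vInl by metis
  qed
  have Ainit: "sp_le X c A" if c: "c \<in> sp_car X" "\<forall>i\<in>I. sp_le X c (a i)" "sp_le B (f c) b" for c
  proof -
    have "c \<in> D" unfolding DD_def using c by blast
    moreover have "sp_le X c (sp_act X c (pm_one S))" using c X_one X_refl by simp
    ultimately have "R (Inl c) (Inr (pm_one S))" by auto
    then have "sp_le Z (cls P R (Inl c)) (cls P R (Inr (pm_one S)))" using leZ S_one c by simp
    then show ?thesis unfolding A_def using vmono oneZ InlZ c vInl by metis
  qed
  show ?thesis using AX fA Aa Ainit by blast
qed

end


theorem mainTheorem7:
  fixes S :: "'s pomon" and B :: "('b, 's) sposet"
    and X :: "('x, 's) sposet" and f :: "'x \<Rightarrow> 'b"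
  assumes "pomonoid S"
    and "is_Sposet S B"
    and "regular_injective TYPE(('x + 's) set) S B X f"
  shows "topological TYPE('i) (sp_car X) (sp_le X) (sp_car B) (sp_le B) f"
  unfolding topological_def
proof (intro allI impI)
  fix I :: "'i set" and a b
  assume h: "b \<in> sp_car B \<and> (\<forall>i\<in>I. a i \<in> sp_car X \<and> sp_le B b (f (a i)))"
  have so: "slice_obj S B X f" using assms(3) unfolding regular_injective_def by blast
  interpret cons S B X f b I a
    using so h unfolding slice_obj_def by unfold_locales auto
  obtain A where A: "A \<in> sp_car X" "\<forall>i\<in>I. sp_le X A (a i)" "f A = b"
    "\<forall>c\<in>sp_car X. (\<forall>i\<in>I. sp_le X c (a i)) \<and> sp_le B (f c) b \<longrightarrow> sp_le X c A"
    using exists_A[OF assms(3)] by blast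
  let ?Q = "\<lambda>A. A \<in> sp_car X \<and> (\<forall>i\<in>I. sp_le X A (a i)) \<and> f A = b \<and>
      initial_source (sp_car X) (sp_le X) (sp_le B) f A I a"
  show "\<exists>!A. ?Q A"
  proof (rule ex1I)
    show "?Q A" unfolding initial_source_def using A h by auto
  next
    fix A' assume A': "?Q A'"
    have "sp_le X A' A" using A A' bB B_refl by auto
    moreover have "sp_le X A A'" using A A' bB B_refl unfolding initial_source_def by auto
    ultimately show "A' = A" using X_antisym A A' by blast
  qed
qed

end
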